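(* Let $S\subset\mathbb{R}^d$ be a nonempty compact convex set with diameter $D:=\sup_{x,y\in S}\|x-y\|$, and let $f$ be differentiable on $S$ with $L$-Lipschitz gradient on $S$. Let $G:=\sup_{x\in S}\|\nabla f(x)\|<\infty$ and fix a constant $C\ge\max\{LD^2,\,GD\}$ (with $C>0$). Let $\delta\ge 0$, and suppose that for every $x\in S$ a vector $g_\delta(x)\in\mathbb{R}^d$ is available with \[ \big|\langle \nabla f(x)-g_\delta(x),\,s-x\rangle\big|\le\delta\quad\text{for all } s\in S. \] Given $x^0\in S$, define iterates for $k=0,1,2,\dots$ by choosing $s^k\in\arg\min_{s\in S}\langle g_\delta(x^k),\,s-x^k\rangle$, setting $\tilde g_k:=\langle g_\delta(x^k),\,x^k-s^k\rangle$, $\overline\alpha_k:=(\tilde g_k-\delta)_+/C$ where $(u)_+:=\max\{u,0\}$, and $x^{k+1}:=x^k+\overline\alpha_k(s^k-x^k)$. Then for every $k\ge 0$, \[ f(x^{k+1})\le f(x^k)-\frac{(\tilde g_k-\delta)_+^2}{2C}. \]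
   Context: $\|\cdot\|$ is the Euclidean norm and $\langle\cdot,\cdot\rangle$ the Euclidean inner product. $f$ need not be convex. *)

theory Defs
  imports "HOL-Analysis.Analysis"
begin

end

theory Submission
  imports Defs
begin

lemma descent_aux:
  fixes S :: "'a::euclidean_space set" and f :: "'a \<Rightarrow> real" and grad_f :: "'a \<Rightarrow> 'a"
  assumes cvx: "convex S"
    and f_diff: "\<And>y. y \<in> S \<Longrightarrow> (f has_derivative (\<lambda>h. grad_f y \<bullet> h)) (at y)"
    and grad_lip: "\<And>y z. y \<in> S \<Longrightarrow> z \<in> S \<Longrightarrow> norm (grad_f y - grad_f z) \<le> L * norm (y - z)"
    and xS: "x \<in> S" and yS: "y \<in> S"
  shows "f y \<le> f x + grad_f x \<bullet> (y - x) + L / 2 * (norm (y - x))\<^sup>2"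
proof -
  define h where "h = y - x"
  define \<phi> where "\<phi> t = f (x + t *\<^sub>R h) - t * (grad_f x \<bullet> h) - L / 2 * t\<^sup>2 * (norm h)\<^sup>2" for t
  have inS: "x + t *\<^sub>R h \<in> S" if "0 \<le> t" "t \<le> 1" for t
  proof -
    have "x + t *\<^sub>R h = (1 - t) *\<^sub>R x + t *\<^sub>R y" by (simp add: h_def algebra_simps)
    then show ?thesis using cvx xS yS that unfolding convex_alt by auto
  qed
  have "\<phi> 1 \<le> \<phi> 0"
  proof (rule DERIV_nonpos_imp_nonincreasing[of 0 1 \<phi>])
    fix t :: real assume t: "0 \<le> t" "t \<le> 1"
    have d1: "((\<lambda>t. x + t *\<^sub>R h) has_derivative (\<lambda>u. u *\<^sub>R h)) (at t)"
      by (auto intro!: derivative_eq_intros)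
    have d2: "((\<lambda>t. f (x + t *\<^sub>R h)) has_derivative (\<lambda>u. grad_f (x + t *\<^sub>R h) \<bullet> (u *\<^sub>R h))) (at t)"
      using has_derivative_compose[OF d1 f_diff[OF inS[OF t]]] by (simp add: o_def)
    have d3: "((\<lambda>t. f (x + t *\<^sub>R h)) has_real_derivative (grad_f (x + t *\<^sub>R h) \<bullet> h)) (at t)"
      unfolding has_field_derivative_def using d2 by (simp add: mult.commute[of _ "grad_f (x + t *\<^sub>R h) \<bullet> h"])
    have D: "(\<phi> has_real_derivative (grad_f (x + t *\<^sub>R h) \<bullet> h - grad_f x \<bullet> h - L * t * (norm h)\<^sup>2)) (at t)"
      unfolding \<phi>_def
      by (rule derivative_eq_intros d3 refl | simp)+
    have "grad_f (x + t *\<^sub>R h) \<bullet> h - grad_f x \<bullet> h = (grad_f (x + t *\<^sub>R h) - grad_f x) \<bullet> h"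
      by (simp add: inner_diff_left)
    also have "\<dots> \<le> norm (grad_f (x + t *\<^sub>R h) - grad_f x) * norm h"
      by (rule norm_cauchy_schwarz)
    also have "\<dots> \<le> (L * norm (t *\<^sub>R h)) * norm h"
      using grad_lip[OF inS[OF t] xS] by (intro mult_right_mono) auto
    also have "\<dots> = L * t * (norm h)\<^sup>2" using t by (simp add: power2_eq_square)
    finally show "\<exists>y. (\<phi> has_real_derivative y) (at t) \<and> y \<le> 0" using D by auto
  qed simp
  then show ?thesis by (simp add: \<phi>_def h_def)
qed

theorem lemma2:
  fixes S :: "'a::euclidean_space set"
    and f :: "'a \<Rightarrow> real" and grad_f :: "'a \<Rightarrow> 'a"
    and g :: "'a \<Rightarrow> 'a"
    and L C \<delta> :: real
    and x s :: "nat \<Rightarrow> 'a"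
  assumes S_ne: "S \<noteq> {}" and S_compact: "compact S" and S_convex: "convex S"
    and f_diff: "\<And>y. y \<in> S \<Longrightarrow> (f has_derivative (\<lambda>h. grad_f y \<bullet> h)) (at y)"
    and grad_lip: "\<And>y z. y \<in> S \<Longrightarrow> z \<in> S \<Longrightarrow> norm (grad_f y - grad_f z) \<le> L * norm (y - z)"
    and G_fin: "bdd_above ((\<lambda>y. norm (grad_f y)) ` S)"
    and C_pos: "C > 0"
    and C_ge1: "C \<ge> L * (diameter S)\<^sup>2"
    and C_ge2: "C \<ge> (SUP y\<in>S. norm (grad_f y)) * diameter S"
    and delta_nonneg: "\<delta> \<ge> 0"
    and g_inexact: "\<And>y t. y \<in> S \<Longrightarrow> t \<in> S \<Longrightarrow> \<bar>(grad_f y - g y) \<bullet> (t - y)\<bar> \<le> \<delta>"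
    and x0: "x 0 \<in> S"
    and s_in: "\<And>k. s k \<in> S"
    and s_min: "\<And>k t. t \<in> S \<Longrightarrow> g (x k) \<bullet> (s k - x k) \<le> g (x k) \<bullet> (t - x k)"
    and x_step: "\<And>k. x (Suc k) = x k + (max (g (x k) \<bullet> (x k - s k) - \<delta>) 0 / C) *\<^sub>R (s k - x k)"
  shows "\<forall>k. f (x (Suc k)) \<le> f (x k) - (max (g (x k) \<bullet> (x k - s k) - \<delta>) 0)\<^sup>2 / (2 * C)"
proof -
  have bS: "bounded S" using S_compact compact_imp_bounded by blast
  have dS: "norm (a - b) \<le> diameter S" if "a \<in> S" "b \<in> S" for a b
    using diameter_bounded_bound[OF bS that] by (simp add: dist_norm)
  have key: "f (x (Suc k)) \<le> f (x k) - (max (g (x k) \<bullet> (x k - s k) - \<delta>) 0)\<^sup>2 / (2 * C)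
     \<and> x (Suc k) \<in> S" if xk: "x k \<in> S" for k
  proof -
    define u where "u = max (g (x k) \<bullet> (x k - s k) - \<delta>) 0"
    define a where "a = u / C"
    define d where "d = s k - x k"
    have u0: "u \<ge> 0" by (simp add: u_def)
    have ginex: "\<bar>(grad_f (x k) - g (x k)) \<bullet> d\<bar> \<le> \<delta>" using g_inexact[OF xk s_in] d_def by simp
    have gd: "grad_f (x k) \<bullet> d = g (x k) \<bullet> d + (grad_f (x k) - g (x k)) \<bullet> d"
      by (simp add: inner_diff_left)
    have nd: "norm d \<le> diameter S" using dS[OF s_in xk] d_def by simp
    have "g (x k) \<bullet> (x k - s k) - \<delta> \<le> - (grad_f (x k) \<bullet> d)"
      using gd ginex by (simp add: d_def inner_diff_right)
    also have "\<dots> \<le> norm (grad_f (x k)) * norm d"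
      using norm_cauchy_schwarz[of "grad_f (x k)" d] Cauchy_Schwarz_ineq2[of "grad_f (x k)" d] by linarith
    also have "\<dots> \<le> (SUP y\<in>S. norm (grad_f y)) * diameter S"
      using nd cSUP_upper[OF xk G_fin] order_trans[OF norm_ge_zero cSUP_upper[OF xk G_fin]] by (intro mult_mono) auto
    finally have uC: "u \<le> C" using C_ge2 u_def C_pos by auto
    have a01: "0 \<le> a" "a \<le> 1" using u0 uC C_pos by (auto simp: a_def)
    have xs: "x (Suc k) = x k + a *\<^sub>R d" using x_step[of k] by (simp add: a_def u_def d_def)
    have inS: "x (Suc k) \<in> S"
    proof -
      have "x (Suc k) = (1 - a) *\<^sub>R x k + a *\<^sub>R s k" by (simp add: xs d_def algebra_simps)
      then show ?thesis using S_convex xk s_in a01 unfolding convex_alt by auto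
    qed
    have desc: "f (x (Suc k)) \<le> f (x k) + grad_f (x k) \<bullet> (a *\<^sub>R d) + L / 2 * (norm (a *\<^sub>R d))\<^sup>2"
      using descent_aux[OF S_convex f_diff grad_lip xk inS] xs by simp
    have lin: "grad_f (x k) \<bullet> (a *\<^sub>R d) \<le> - a * u"
    proof (cases "u = 0")
      case True then show ?thesis using a_def by simp
    next
      case False
      then have "u = g (x k) \<bullet> (x k - s k) - \<delta>" by (simp add: u_def split: if_splits)
      then have "grad_f (x k) \<bullet> d \<le> - u"
        using gd ginex by (simp add: d_def inner_diff_right)
      then show ?thesis using a01 using mult_left_mono[of "grad_f (x k) \<bullet> d" "- u" a] by simp
    qed
    have quad: "L / 2 * (norm (a *\<^sub>R d))\<^sup>2 \<le> a\<^sup>2 * C / 2"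
    proof (cases "L \<ge> 0")
      case True
      have "(norm d)\<^sup>2 \<le> (diameter S)\<^sup>2" using nd by (simp add: power_mono)
      then have "L * (norm d)\<^sup>2 \<le> C" using C_ge1 True mult_left_mono order_trans by blast
      then have "a\<^sup>2 * (L * (norm d)\<^sup>2) \<le> a\<^sup>2 * C" by (simp add: mult_left_mono)
      then show ?thesis by (simp add: power_mult_distrib algebra_simps)
    next
      case False
      then have "L / 2 * (norm (a *\<^sub>R d))\<^sup>2 \<le> 0" by (simp add: mult_nonpos_nonneg)
      also have "0 \<le> a\<^sup>2 * C / 2" using C_pos by simp
      finally show ?thesis .
    qed
    have "- a * u + a\<^sup>2 * C / 2 = - u\<^sup>2 / (2 * C)" using C_pos
      by (simp add: a_def field_simps power2_eq_square)
    then show ?thesis using desc lin quad inS by (simp add: u_def)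
  qed
  have all: "x k \<in> S" for k
    by (induction k) (use x0 key in auto)
  show ?thesis using key all by blast
qed

end
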